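(* Let $\kappa=\lambda^+$ with $\lambda$ a regular cardinal, and let $T$ be a tree of height $\kappa$ and size $\kappa$ which has at most $\kappa$ cofinal branches and in which every node has $\kappa$ many successors. Let $\langle b_\alpha:\alpha<\kappa\rangle$ be an enumeration of the cofinal branches of $T$, for each $\alpha<\kappa$ let $s_\alpha$ be the $\leq_T$-least element of $b_\alpha\setminus\bigcup_{\beta<\alpha}b_\beta$, and let $T^\star=\{t\in T:\neg\exists\alpha\,(s_\alpha<_T t\in b_\alpha)\}$. Assume there is a function $F:T^\star\to\lambda$ such that whenever $x\neq y$ are in $T^\star$ and $F(x)=F(y)$, then $x$ and $y$ are $\leq_T$-incomparable. Then there is $F':T\to\lambda$ with $F'\supseteq F$ such that $F'$ specializes $T$.
   Context: A function $F':T\to\lambda$ specializes $T$ (and $T$ is then called special) if for all $x,y,z\in T$, if $x\leq_T y$, $x\leq_T z$ and $F'(x)=F'(y)=F'(z)$, then $y\leq_T z$ or $z\leq_T y$. *)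

theory Defs
  imports Main
begin

unbundle cardinal_syntax

definition is_tree :: "'a set \<Rightarrow> 'a rel \<Rightarrow> bool" where
  "is_tree T le \<longleftrightarrow> le \<subseteq> T \<times> T \<and> (\<forall>t\<in>T. (t,t) \<in> le) \<and> antisym le \<and> trans le
     \<and> (\<forall>t\<in>T. Well_order (Restr le {s. (s,t) \<in> le}))"

definition tpred :: "'a rel \<Rightarrow> 'a \<Rightarrow> 'a set" where
  "tpred le t = {s. (s,t) \<in> le \<and> s \<noteq> t}"

definition ht :: "'a rel \<Rightarrow> 'a \<Rightarrow> 'a rel" where
  "ht le t = Restr le (tpred le t)"

definition has_height :: "'a set \<Rightarrow> 'a rel \<Rightarrow> 'k rel \<Rightarrow> bool" where
  "has_height T le kap \<longleftrightarrow> (\<forall>t\<in>T. ht le t <o kap)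
     \<and> (\<forall>r :: 'a rel. Well_order r \<and> r <o kap \<longrightarrow> (\<exists>t\<in>T. ht le t =o r))"

definition imm_succs :: "'a set \<Rightarrow> 'a rel \<Rightarrow> 'a \<Rightarrow> 'a set" where
  "imm_succs T le t = {s\<in>T. (t,s) \<in> le \<and> s \<noteq> t \<and>
      \<not> (\<exists>u\<in>T. u \<noteq> t \<and> u \<noteq> s \<and> (t,u) \<in> le \<and> (u,s) \<in> le)}"

definition cofinal_branch :: "'a set \<Rightarrow> 'a rel \<Rightarrow> 'k rel \<Rightarrow> 'a set \<Rightarrow> bool" where
  "cofinal_branch T le kap b \<longleftrightarrow> b \<subseteq> T
     \<and> (\<forall>x\<in>b. \<forall>y\<in>b. (x,y) \<in> le \<or> (y,x) \<in> le)
     \<and> (\<forall>y\<in>b. \<forall>x\<in>T. (x,y) \<in> le \<longrightarrow> x \<in> b)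
     \<and> (\<forall>r :: 'a rel. Well_order r \<and> r <o kap \<longrightarrow> (\<exists>t\<in>b. ht le t =o r))"

definition is_least :: "'a rel \<Rightarrow> 'a set \<Rightarrow> 'a \<Rightarrow> bool" where
  "is_least le D s \<longleftrightarrow> s \<in> D \<and> (\<forall>x\<in>D. (s,x) \<in> le)"

definition Tstar :: "'a set \<Rightarrow> 'a rel \<Rightarrow> 'k rel \<Rightarrow> ('k \<Rightarrow> 'a set) \<Rightarrow> 'a set" where
  "Tstar T le kap bs = {t\<in>T. \<not> (\<exists>\<alpha>\<in>Field kap. \<exists>s.
      is_least le (bs \<alpha> - (\<Union>\<beta>\<in>{\<beta>. (\<beta>,\<alpha>) \<in> kap \<and> \<beta> \<noteq> \<alpha>}. bs \<beta>)) s
      \<and> (s,t) \<in> le \<and> s \<noteq> t \<and> t \<in> bs \<alpha>)}"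

definition specializes :: "'a set \<Rightarrow> 'a rel \<Rightarrow> ('a \<Rightarrow> 'l) \<Rightarrow> bool" where
  "specializes T le F \<longleftrightarrow> (\<forall>x\<in>T. \<forall>y\<in>T. \<forall>z\<in>T.
     (x,y) \<in> le \<and> (x,z) \<in> le \<and> F x = F y \<and> F x = F z \<longrightarrow> (y,z) \<in> le \<or> (z,y) \<in> le)"

end

theory Submission
  imports Defs
begin

lemma tree_cmp:
  assumes "is_tree T le" "(a,y)\<in>le" "(b,y)\<in>le"
  shows "(a,b)\<in>le \<or> (b,a)\<in>le"
proof (cases "a = b")
  case True
  then show ?thesis using assms unfolding is_tree_def by blast
next
  case False
  have yT: "y \<in> T" using assms unfolding is_tree_def by blast
  let ?W = "Restr le {s. (s,y) \<in> le}"
  have W: "Well_order ?W" using assms yT unfolding is_tree_def by blast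
  have aT: "a \<in> T" "b \<in> T" using assms unfolding is_tree_def by blast+
  have "(a,a) \<in> ?W" "(b,b) \<in> ?W" using assms aT unfolding is_tree_def by auto
  then have "a \<in> Field ?W" "b \<in> Field ?W" by (auto simp: Field_def)
  then have "(a,b) \<in> ?W \<or> (b,a) \<in> ?W"
    using W False unfolding well_order_on_def linear_order_on_def total_on_def by blast
  then show ?thesis by blast
qed

theorem lemma4p3:
  fixes lam :: "'l rel" and kap :: "'k rel" and T :: "'a set" and le :: "'a rel"
    and bs :: "'k \<Rightarrow> 'a set" and F :: "'a \<Rightarrow> 'l"
  assumes lam_card: "Card_order lam" and lam_inf: "\<not> finite (Field lam)"
    and lam_reg: "regularCard lam"
    and kap_card: "Card_order kap" and kap_suc: "(kap, cardSuc lam) \<in> ordIso"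
    and tree: "is_tree T le"
    and height: "has_height T le kap"
    and size: "(card_of T, kap) \<in> ordIso"
    and few_branches: "(card_of {b. cofinal_branch T le kap b}, kap) \<in> ordLeq"
    and succs: "\<forall>t\<in>T. (card_of (imm_succs T le t), kap) \<in> ordIso"
    and enum: "bs ` Field kap = {b. cofinal_branch T le kap b}"
    and F_range: "\<forall>t\<in>Tstar T le kap bs. F t \<in> Field lam"
    and F_spec: "\<forall>x\<in>Tstar T le kap bs. \<forall>y\<in>Tstar T le kap bs.
                   x \<noteq> y \<and> F x = F y \<longrightarrow> (x,y) \<notin> le \<and> (y,x) \<notin> le"
  shows "\<exists>F' :: 'a \<Rightarrow> 'l. (\<forall>t\<in>T. F' t \<in> Field lam)
           \<and> (\<forall>t\<in>Tstar T le kap bs. F' t = F t)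
           \<and> specializes T le F'"
proof -
  have WO: "Well_order kap" using kap_card card_order_on_well_order_on by blast
  have ktot: "\<And>\<alpha> \<beta>. \<alpha> \<in> Field kap \<Longrightarrow> \<beta> \<in> Field kap \<Longrightarrow> \<alpha> \<noteq> \<beta> \<Longrightarrow> (\<alpha>,\<beta>) \<in> kap \<or> (\<beta>,\<alpha>) \<in> kap"
    using WO unfolding well_order_on_def linear_order_on_def total_on_def by blast
  have ltrans: "trans le" and lanti: "antisym le" and lsub: "le \<subseteq> T \<times> T"
    and lrefl: "\<forall>t\<in>T. (t,t) \<in> le"
    using tree unfolding is_tree_def by auto
  define D where "D \<alpha> = bs \<alpha> - (\<Union>\<beta>\<in>{\<beta>. (\<beta>,\<alpha>) \<in> kap \<and> \<beta> \<noteq> \<alpha>}. bs \<beta>)" for \<alpha>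
  define P where "P \<alpha> s t \<longleftrightarrow> \<alpha> \<in> Field kap \<and> is_least le (D \<alpha>) s \<and> (s,t) \<in> le \<and> s \<noteq> t \<and> t \<in> bs \<alpha>" for \<alpha> s t
  have TS: "Tstar T le kap bs = {t\<in>T. \<not> (\<exists>\<alpha> s. P \<alpha> s t)}"
    unfolding Tstar_def P_def D_def by blast
  have br: "\<And>\<alpha>. \<alpha> \<in> Field kap \<Longrightarrow> cofinal_branch T le kap (bs \<alpha>)"
    using enum by blast
  have least_star: "s \<in> Tstar T le kap bs" if a: "\<alpha> \<in> Field kap" "is_least le (D \<alpha>) s" for \<alpha> s
  proof -
    have sb: "s \<in> bs \<alpha>" and sD: "s \<in> D \<alpha>" using a unfolding is_least_def D_def by auto
    have sT: "s \<in> T" using br[OF a(1)] sb unfolding cofinal_branch_def by blast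
    have "\<not> P \<beta> s' s" for \<beta> s'
    proof
      assume p: "P \<beta> s' s"
      have s'T: "s' \<in> T" using p lsub unfolding P_def by blast
      have s'D: "s' \<in> D \<beta>" and b: "\<beta> \<in> Field kap" using p unfolding P_def is_least_def by auto
      show False
      proof (cases "\<beta> = \<alpha>")
        case True
        then have "s' \<in> D \<alpha>" using s'D by simp
        then have "(s,s') \<in> le" using a(2) unfolding is_least_def by blast
        then show False using p lanti unfolding P_def antisym_def by blast
      next
        case False
        then consider "(\<beta>,\<alpha>) \<in> kap" | "(\<alpha>,\<beta>) \<in> kap" using ktot a(1) b by blast
        then show False
        proof cases
          case 1
          then show False using sD p False unfolding D_def P_def by blast
        next
          case 2
          have "s' \<in> bs \<alpha>" using br[OF a(1)] sb s'T p unfolding cofinal_branch_def P_def by blast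
          then show False using s'D 2 False unfolding D_def by blast
        qed
      qed
    qed
    then show ?thesis using TS sT by blast
  qed
  have least_uniq: "\<alpha> = \<beta>" if "\<alpha> \<in> Field kap" "\<beta> \<in> Field kap" "is_least le (D \<alpha>) s" "is_least le (D \<beta>) s" for \<alpha> \<beta> s
  proof (rule ccontr)
    assume ne: "\<alpha> \<noteq> \<beta>"
    have "s \<in> D \<alpha>" "s \<in> D \<beta>" using that unfolding is_least_def by auto
    then show False using ktot[OF that(1,2) ne] ne unfolding D_def by blast
  qed
  define r where "r t = (if t \<in> Tstar T le kap bs then t else (SOME s. \<exists>\<alpha>. P \<alpha> s t))" for t
  have rprop: "r t \<in> Tstar T le kap bs \<and> (r t, t) \<in> le \<and> (r t = t \<or> (\<exists>\<alpha>. P \<alpha> (r t) t))"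
    if tT: "t \<in> T" for t
  proof (cases "t \<in> Tstar T le kap bs")
    case True
    then show ?thesis using r_def lrefl tT by auto
  next
    case False
    then have ex: "\<exists>s \<alpha>. P \<alpha> s t" using TS tT by blast
    have rt: "r t = (SOME s. \<exists>\<alpha>. P \<alpha> s t)" using False r_def by simp
    have "\<exists>\<alpha>. P \<alpha> (SOME s. \<exists>\<alpha>. P \<alpha> s t) t" using ex by (rule someI_ex)
    then have "\<exists>\<alpha>. P \<alpha> (r t) t" using rt by simp
    then obtain \<alpha> where pa: "P \<alpha> (r t) t" by blast
    then have "r t \<in> Tstar T le kap bs" using least_star unfolding P_def by blast
    then show ?thesis using pa unfolding P_def by blast
  qed
  define F' where "F' t = F (r t)" for t
  have "\<forall>t\<in>T. F' t \<in> Field lam" unfolding F'_def using rprop F_range by blast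
  moreover have "\<forall>t\<in>Tstar T le kap bs. F' t = F t" using F'_def r_def by simp
  moreover have "specializes T le F'"
    unfolding specializes_def
  proof (intro ballI impI)
    fix x y z assume xyz: "x \<in> T" "y \<in> T" "z \<in> T"
      and h: "(x, y) \<in> le \<and> (x, z) \<in> le \<and> F' x = F' y \<and> F' x = F' z"
    have rx: "r x \<in> Tstar T le kap bs" "(r x, x) \<in> le" using rprop xyz(1) by auto
    have ry: "r y \<in> Tstar T le kap bs" "(r y, y) \<in> le" using rprop xyz(2) by auto
    have rz: "r z \<in> Tstar T le kap bs" "(r z, z) \<in> le" using rprop xyz(3) by auto
    have "(r x, y) \<in> le" using rx h ltrans unfolding trans_def by blast
    then have "(r x, r y) \<in> le \<or> (r y, r x) \<in> le" using tree_cmp[OF tree] ry by blast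
    moreover have "F (r x) = F (r y)" using h unfolding F'_def by argo
    ultimately have e1: "r x = r y" using F_spec rx(1) ry(1) by blast
    have "(r x, z) \<in> le" using rx h ltrans unfolding trans_def by blast
    then have "(r x, r z) \<in> le \<or> (r z, r x) \<in> le" using tree_cmp[OF tree] rz by blast
    moreover have "F (r x) = F (r z)" using h unfolding F'_def by argo
    ultimately have e2: "r x = r z" using F_spec rx(1) rz(1) by blast
    have yc: "r y = y \<or> (\<exists>\<alpha>. P \<alpha> (r y) y)" using rprop xyz(2) by blast
    have zc: "r z = z \<or> (\<exists>\<alpha>. P \<alpha> (r z) z)" using rprop xyz(3) by blast
    show "(y, z) \<in> le \<or> (z, y) \<in> le"
    proof (cases "r y = y")
      case True
      then show ?thesis using e1 e2 rz by auto
    next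
      case F1: False
      show ?thesis
      proof (cases "r z = z")
        case True
        then show ?thesis using e1 e2 ry by auto
      next
        case False
        obtain \<alpha> \<beta> where pa: "P \<alpha> (r y) y" and pb: "P \<beta> (r z) z" using yc zc F1 False by blast
        have "is_least le (D \<alpha>) (r x)" "is_least le (D \<beta>) (r x)" "\<alpha> \<in> Field kap" "\<beta> \<in> Field kap"
          using pa pb e1 e2 unfolding P_def by auto
        then have "\<alpha> = \<beta>" using least_uniq by blast
        then have "y \<in> bs \<alpha>" "z \<in> bs \<alpha>" "\<alpha> \<in> Field kap" using pa pb unfolding P_def by auto
        then show ?thesis using br unfolding cofinal_branch_def by blast
      qed
    qed
  qed
  ultimately show ?thesis by blast
qed

end
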